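(* In $A_n$ we have, for all $a\in\mathbb{N}_0$, \[ T_i\omega_k^a=\omega_k^aT_i \quad (i\neq k),\qquad T_i(\omega_i^a-x_{i+1}\omega_{i+1}^a)=(\omega_i^a-x_{i+1}\omega_{i+1}^a)T_i, \] for all $1\le i\le n-1$ and $1\le k\le n$.
   Context: $R=\mathbb{Z}[x_1,\dots,x_n]\otimes\bigwedge^\bullet(\omega_1,\dots,\omega_n)$ (supercommutative, $x_i$ even, $\omega_i$ odd); $S_n$ acts by $s_i(x_j)=x_{s_i(j)}$, $s_i(\omega_j)=\omega_j+\delta_{ij}(x_i-x_{i+1})\omega_{i+1}$; $T_i$ denotes the Demazure operator $f\mapsto(f-s_i(f))/(x_i-x_{i+1})$. $A_n$ is the superalgebra of operators on $R$ generated by the $T_i$ and multiplication by elements of $R$. Labeled elements: $\omega_k^0=\omega_k$, $\omega_0^a=0$, $\omega_k^a=\omega_{k-1}^{a-1}-x_k\omega_k^{a-1}$ for $a\ge1$. *)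

theory Defs
  imports "HOL-Library.Poly_Mapping"
begin

text \<open>The superalgebra R = Z[x_1,x_2,...] tensor Lambda(omega_1,omega_2,...), as the free
  Z-module with basis x^alpha omega_S, where alpha is a finitely supported exponent vector and
  omega_S = omega_(s1) ... omega_(sm) for S = {s1 < ... < sm}.  The ring R of the paper (with n
  variables) is the subset inR n (only indices 1..n occur).\<close>

type_synonym R = "((nat \<Rightarrow>\<^sub>0 nat) \<times> nat set) \<Rightarrow>\<^sub>0 int"

text \<open>Sign of omega_A omega_B = sgn * omega_(A union B) for disjoint A, B.\<close>
definition wsign :: "nat set \<Rightarrow> nat set \<Rightarrow> int" where
  "wsign A B = (-1) ^ card {(a, b). a \<in> A \<and> b \<in> B \<and> b < a}"

definition rmul :: "R \<Rightarrow> R \<Rightarrow> R" where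
  "rmul f g = (\<Sum>p\<in>Poly_Mapping.keys f. \<Sum>q\<in>Poly_Mapping.keys g.
      if snd p \<inter> snd q = {}
      then Poly_Mapping.single (fst p + fst q, snd p \<union> snd q)
             (wsign (snd p) (snd q) * Poly_Mapping.lookup f p * Poly_Mapping.lookup g q)
      else 0)"

definition rconst :: "int \<Rightarrow> R" where
  "rconst c = Poly_Mapping.single (0, {}) c"

definition X :: "nat \<Rightarrow> R" where
  "X j = Poly_Mapping.single (Poly_Mapping.single j 1, {}) 1"

definition W :: "nat \<Rightarrow> R" where
  "W j = Poly_Mapping.single (0, {j}) 1"

definition rprod :: "R list \<Rightarrow> R" where
  "rprod xs = foldr rmul xs (rconst 1)"

text \<open>The algebra endomorphism of R determined by images of the generators x_j and omega_j.\<close>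
definition hom_eval :: "(nat \<Rightarrow> R) \<Rightarrow> (nat \<Rightarrow> R) \<Rightarrow> R \<Rightarrow> R" where
  "hom_eval px pw f = (\<Sum>p\<in>Poly_Mapping.keys f. rmul (rconst (Poly_Mapping.lookup f p))
      (rprod (concat (map (\<lambda>j. replicate (Poly_Mapping.lookup (fst p) j) (px j))
                          (sorted_list_of_set (Poly_Mapping.keys (fst p))))
              @ map pw (sorted_list_of_set (snd p)))))"

definition s :: "nat \<Rightarrow> R \<Rightarrow> R" where
  "s i = hom_eval
     (\<lambda>j. X (if j = i then Suc i else if j = Suc i then i else j))
     (\<lambda>j. if j = i then W i + rmul (X i - X (Suc i)) (W (Suc i)) else W j)"

definition T :: "nat \<Rightarrow> R \<Rightarrow> R" where
  "T i f = (THE g. rmul (X i - X (Suc i)) g = f - s i f)"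

fun omega :: "nat \<Rightarrow> nat \<Rightarrow> R" where
  "omega 0 a = 0"
| "omega (Suc k) 0 = W (Suc k)"
| "omega (Suc k) (Suc a) = omega k a - rmul (X (Suc k)) (omega (Suc k) a)"

definition inR :: "nat \<Rightarrow> R \<Rightarrow> bool" where
  "inR n f = (\<forall>p\<in>Poly_Mapping.keys f. Poly_Mapping.keys (fst p) \<subseteq> {1..n} \<and> snd p \<subseteq> {1..n})"

end

theory Submission imports Defs "HOL-Library.Multiset" begin

abbreviation lk where "lk \<equiv> Poly_Mapping.lookup"
abbreviation ks where "ks \<equiv> Poly_Mapping.keys"
abbreviation sg where "sg \<equiv> Poly_Mapping.single"

type_synonym K = "(nat \<Rightarrow>\<^sub>0 nat) \<times> nat set"

definition tm :: "K \<Rightarrow> K \<Rightarrow> int \<Rightarrow> int \<Rightarrow> R" where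
  "tm p q a b = (if snd p \<inter> snd q = {} then sg (fst p + fst q, snd p \<union> snd q) (wsign (snd p) (snd q) * a * b) else 0)"

lemma rmul_tm: "rmul f g = (\<Sum>p\<in>ks f. \<Sum>q\<in>ks g. tm p q (lk f p) (lk g q))"
  unfolding rmul_def tm_def by (rule sum.cong[OF refl])+ simp

lemma tm_zero1[simp]: "tm p q 0 b = 0" and tm_zero2[simp]: "tm p q a 0 = 0"
  by (simp_all add: tm_def)

lemma tm_add1: "tm p q (a+a') b = tm p q a b + tm p q a' b"
  and tm_add2: "tm p q a (b+b') = tm p q a b + tm p q a b'"
  by (simp_all add: tm_def single_add algebra_simps)

lemma tm_diff1: "tm p q (a-a') b = tm p q a b - tm p q a' b"
  and tm_diff2: "tm p q a (b-b') = tm p q a b - tm p q a b'"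
  by (simp_all add: tm_def single_diff algebra_simps)

lemma tm_uminus1: "tm p q (-a) b = - tm p q a b"
  and tm_uminus2: "tm p q a (-b) = - tm p q a b"
  by (simp_all add: tm_def single_uminus)

lemma rmul_expand:
  assumes "finite P" "ks f \<subseteq> P" "finite Q" "ks g \<subseteq> Q"
  shows "rmul f g = (\<Sum>p\<in>P. \<Sum>q\<in>Q. tm p q (lk f p) (lk g q))"
proof -
  have "(\<Sum>p\<in>P. \<Sum>q\<in>Q. tm p q (lk f p) (lk g q)) = (\<Sum>p\<in>ks f. \<Sum>q\<in>Q. tm p q (lk f p) (lk g q))"
    by (rule sum.mono_neutral_right) (use assms in \<open>auto simp: in_keys_iff\<close>)
  also have "\<dots> = (\<Sum>p\<in>ks f. \<Sum>q\<in>ks g. tm p q (lk f p) (lk g q))"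
    by (rule sum.cong[OF refl], rule sum.mono_neutral_right) (use assms in \<open>auto simp: in_keys_iff\<close>)
  finally show ?thesis by (simp add: rmul_tm)
qed

lemma rmul_add1: "rmul (f + f') g = rmul f g + rmul f' g"
proof -
  let ?P = "ks f \<union> ks f' \<union> ks (f + f')"
  have "rmul (f + f') g = (\<Sum>p\<in>?P. \<Sum>q\<in>ks g. tm p q (lk (f+f') p) (lk g q))"
    by (rule rmul_expand) auto
  also have "\<dots> = (\<Sum>p\<in>?P. \<Sum>q\<in>ks g. tm p q (lk f p) (lk g q)) + (\<Sum>p\<in>?P. \<Sum>q\<in>ks g. tm p q (lk f' p) (lk g q))"
    by (simp only: lookup_add tm_add1 sum.distrib)
  also have "\<dots> = rmul f g + rmul f' g"
    by (subst (1 2) rmul_expand[where P="?P" and Q="ks g"]) auto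
  finally show ?thesis .
qed

lemma rmul_add2: "rmul f (g + g') = rmul f g + rmul f g'"
proof -
  let ?Q = "ks g \<union> ks g' \<union> ks (g + g')"
  have "rmul f (g + g') = (\<Sum>p\<in>ks f. \<Sum>q\<in>?Q. tm p q (lk f p) (lk (g+g') q))"
    by (rule rmul_expand) auto
  also have "\<dots> = (\<Sum>p\<in>ks f. \<Sum>q\<in>?Q. tm p q (lk f p) (lk g q)) + (\<Sum>p\<in>ks f. \<Sum>q\<in>?Q. tm p q (lk f p) (lk g' q))"
    by (simp only: lookup_add tm_add2 sum.distrib)
  also have "\<dots> = rmul f g + rmul f g'"
    by (subst (1 2) rmul_expand[where P="ks f" and Q="?Q"]) auto
  finally show ?thesis .
qed

lemma rmul_zero1[simp]: "rmul 0 g = 0" and rmul_zero2[simp]: "rmul f 0 = 0"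
  by (simp_all add: rmul_def)

lemma rmul_uminus1: "rmul (- f) g = - rmul f g"
proof -
  have "rmul (- f + f) g = rmul (- f) g + rmul f g" by (rule rmul_add1)
  then show ?thesis by (simp add: eq_neg_iff_add_eq_0)
qed
lemma rmul_uminus2: "rmul f (- g) = - rmul f g"
proof -
  have "rmul f (- g + g) = rmul f (- g) + rmul f g" by (rule rmul_add2)
  then show ?thesis by (simp add: eq_neg_iff_add_eq_0)
qed
lemma rmul_diff1: "rmul (f - f') g = rmul f g - rmul f' g"
  by (simp only: diff_conv_add_uminus rmul_add1 rmul_uminus1)
lemma rmul_diff2: "rmul f (g - g') = rmul f g - rmul f g'"
  by (simp only: diff_conv_add_uminus rmul_add2 rmul_uminus2)

lemma rmul_sum1: "rmul (\<Sum>x\<in>A. F x) g = (\<Sum>x\<in>A. rmul (F x) g)"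
  by (induction A rule: infinite_finite_induct) (simp_all add: rmul_add1)
lemma rmul_sum2: "rmul f (\<Sum>x\<in>A. G x) = (\<Sum>x\<in>A. rmul f (G x))"
  by (induction A rule: infinite_finite_induct) (simp_all add: rmul_add2)

lemma rmul_single: "rmul (sg p a) (sg q b) = tm p q a b"
  by (subst rmul_expand[where P="{p}" and Q="{q}"]) auto





lemma poly_expand: "f = (\<Sum>p\<in>ks f. sg p (lk f p))"
proof (rule poly_mapping_eqI)
  fix k
  have "lk (\<Sum>p\<in>ks f. sg p (lk f p)) k = (\<Sum>p\<in>ks f. if p = k then lk f p else 0)"
    by (simp add: lookup_sum lookup_single when_def)
  also have "\<dots> = lk f k" by (simp add: sum.delta in_keys_iff)
  finally show "lk f k = lk (\<Sum>p\<in>ks f. sg p (lk f p)) k" by simp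
qed

lemma rmul_expand_l: "rmul f u = (\<Sum>p\<in>ks f. rmul (sg p (lk f p)) u)"
proof -
  have "rmul f u = rmul (\<Sum>p\<in>ks f. sg p (lk f p)) u" by (subst poly_expand[of f]) (rule refl)
  then show ?thesis by (simp only: rmul_sum1)
qed

lemma rmul_expand_r: "rmul u f = (\<Sum>p\<in>ks f. rmul u (sg p (lk f p)))"
proof -
  have "rmul u f = rmul u (\<Sum>p\<in>ks f. sg p (lk f p))" by (subst poly_expand[of f]) (rule refl)
  then show ?thesis by (simp only: rmul_sum2)
qed

definition inv :: "nat set \<Rightarrow> nat set \<Rightarrow> (nat \<times> nat) set" where
  "inv A B = {(a, b). a \<in> A \<and> b \<in> B \<and> b < a}"

lemma wsign_inv: "wsign A B = (-1) ^ card (inv A B)"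
  by (simp add: wsign_def inv_def)

lemma wsign_empty1[simp]: "wsign {} B = 1" and wsign_empty2[simp]: "wsign A {} = 1"
  by (simp_all add: wsign_def)

lemma finite_inv: "finite A \<Longrightarrow> finite B \<Longrightarrow> finite (inv A B)"
  by (rule finite_subset[of _ "A \<times> B"]) (auto simp: inv_def)

lemma card_inv_un1: "finite A \<Longrightarrow> finite B \<Longrightarrow> finite C \<Longrightarrow> A \<inter> B = {} \<Longrightarrow>
  card (inv (A \<union> B) C) = card (inv A C) + card (inv B C)"
proof -
  assume f: "finite A" "finite B" "finite C" and d: "A \<inter> B = {}"
  have "inv (A \<union> B) C = inv A C \<union> inv B C" by (auto simp: inv_def)
  moreover have "inv A C \<inter> inv B C = {}" using d by (auto simp: inv_def)
  ultimately show ?thesis using f by (simp add: card_Un_disjoint finite_inv)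
qed

lemma card_inv_un2: "finite A \<Longrightarrow> finite B \<Longrightarrow> finite C \<Longrightarrow> B \<inter> C = {} \<Longrightarrow>
  card (inv A (B \<union> C)) = card (inv A B) + card (inv A C)"
proof -
  assume f: "finite A" "finite B" "finite C" and d: "B \<inter> C = {}"
  have "inv A (B \<union> C) = inv A B \<union> inv A C" by (auto simp: inv_def)
  moreover have "inv A B \<inter> inv A C = {}" using d by (auto simp: inv_def)
  ultimately show ?thesis using f by (simp add: card_Un_disjoint finite_inv)
qed

definition cnd :: "nat set \<Rightarrow> nat set \<Rightarrow> nat set \<Rightarrow> bool" where
  "cnd A B C = ((finite A \<and> finite B \<and> finite C) \<or> A = {} \<or> B = {} \<or> C = {})"

lemma wsign_assoc:
  assumes "cnd A B C" "A \<inter> B = {}" "A \<inter> C = {}" "B \<inter> C = {}"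
  shows "wsign A B * wsign (A \<union> B) C = wsign A (B \<union> C) * wsign B C"
proof -
  consider "finite A \<and> finite B \<and> finite C" | "A = {}" | "B = {}" | "C = {}"
    using assms(1) unfolding cnd_def by blast
  then show ?thesis
  proof cases
    case 1
    then show ?thesis using assms
      by (simp add: wsign_inv card_inv_un1 card_inv_un2 power_add)
  qed auto
qed

lemma tm_assoc:
  assumes "cnd (snd p) (snd q) (snd r)"
  shows "rmul (tm p q a b) (sg r c) = rmul (sg p a) (tm q r b c)"
proof (cases "snd p \<inter> snd q = {} \<and> snd q \<inter> snd r = {} \<and> snd p \<inter> snd r = {}")
  case True
  have "wsign (snd p) (snd q) * wsign (snd p \<union> snd q) (snd r) = wsign (snd p) (snd q \<union> snd r) * wsign (snd q) (snd r)"
    using wsign_assoc[OF assms] True by auto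
  then have e2: "wsign (snd p \<union> snd q) (snd r) * (wsign (snd p) (snd q) * a * b) * c =
    wsign (snd p) (snd q \<union> snd r) * a * (wsign (snd q) (snd r) * b * c)"
    by (simp add: algebra_simps)
  show ?thesis using True
    by (simp add: tm_def rmul_single Int_Un_distrib Int_Un_distrib2 add.assoc Un_assoc) (metis e2)
next
  case False
  then show ?thesis
    by (auto simp: tm_def rmul_single Int_Un_distrib Int_Un_distrib2)
qed

lemma rmul_assoc:
  assumes "\<And>p q r. p \<in> ks f \<Longrightarrow> q \<in> ks g \<Longrightarrow> r \<in> ks h \<Longrightarrow> cnd (snd p) (snd q) (snd r)"
  shows "rmul (rmul f g) h = rmul f (rmul g h)"
proof -
  have "rmul (rmul f g) h = (\<Sum>p\<in>ks f. \<Sum>q\<in>ks g. \<Sum>r\<in>ks h. rmul (tm p q (lk f p) (lk g q)) (sg r (lk h r)))"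
  proof -
    have "rmul (rmul f g) h = (\<Sum>p\<in>ks f. \<Sum>q\<in>ks g. rmul (tm p q (lk f p) (lk g q)) h)"
      by (simp only: rmul_tm[of f g] rmul_sum1)
    then show ?thesis by (simp only: rmul_expand_r[of _ h])
  qed
  also have "\<dots> = (\<Sum>p\<in>ks f. \<Sum>q\<in>ks g. \<Sum>r\<in>ks h. rmul (sg p (lk f p)) (tm q r (lk g q) (lk h r)))"
    by (intro sum.cong refl tm_assoc assms)
  also have "\<dots> = (\<Sum>p\<in>ks f. rmul (sg p (lk f p)) (rmul g h))"
    by (simp only: rmul_tm[of g h] rmul_sum2)
  also have "\<dots> = rmul f (rmul g h)" by (rule rmul_expand_l[symmetric])
  finally show ?thesis .
qed

definition pure :: "R \<Rightarrow> bool" where "pure f = (\<forall>p\<in>ks f. snd p = {})"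
definition fin :: "R \<Rightarrow> bool" where "fin f = (\<forall>p\<in>ks f. finite (snd p))"
definition odd_el :: "R \<Rightarrow> bool" where "odd_el f = (\<forall>p\<in>ks f. finite (snd p) \<and> odd (card (snd p)))"

lemma rmul_assoc_fin: "fin f \<Longrightarrow> fin g \<Longrightarrow> fin h \<Longrightarrow> rmul (rmul f g) h = rmul f (rmul g h)"
  by (rule rmul_assoc) (auto simp: fin_def cnd_def)
lemma rmul_assoc_p1: "pure f \<Longrightarrow> rmul (rmul f g) h = rmul f (rmul g h)"
  by (rule rmul_assoc) (auto simp: pure_def cnd_def)
lemma rmul_assoc_p2: "pure g \<Longrightarrow> rmul (rmul f g) h = rmul f (rmul g h)"
  by (rule rmul_assoc) (auto simp: pure_def cnd_def)
lemma rmul_assoc_p3: "pure h \<Longrightarrow> rmul (rmul f g) h = rmul f (rmul g h)"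
  by (rule rmul_assoc) (auto simp: pure_def cnd_def)

lemma tm_comm: "snd p = {} \<Longrightarrow> tm p q a b = tm q p b a"
  by (simp add: tm_def add.commute mult.commute)

lemma rmul_comm: assumes "pure f" shows "rmul f g = rmul g f"
proof -
  have "rmul f g = (\<Sum>p\<in>ks f. \<Sum>q\<in>ks g. tm q p (lk g q) (lk f p))"
    unfolding rmul_tm using assms by (intro sum.cong refl tm_comm) (auto simp: pure_def)
  also have "\<dots> = rmul g f" unfolding rmul_tm by (rule sum.swap)
  finally show ?thesis .
qed

lemma rmul_swap: "pure e \<Longrightarrow> rmul u (rmul e v) = rmul e (rmul u v)"
  by (metis rmul_assoc_p1 rmul_assoc_p2 rmul_comm)

lemma card_inv_swap:
  assumes "finite A" "finite B" "A \<inter> B = {}"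
  shows "card (inv A B) + card (inv B A) = card A * card B"
proof -
  have "inv A B \<union> prod.swap ` inv B A = A \<times> B" using assms(3) by (auto simp: inv_def image_iff)
  moreover have "inv A B \<inter> prod.swap ` inv B A = {}" by (auto simp: inv_def)
  moreover have "card (prod.swap ` inv B A) = card (inv B A)" by (rule card_image) simp
  ultimately show ?thesis using assms
    by (metis card_Un_disjoint card_cartesian_product finite_imageI finite_inv)
qed

lemma tm_anti: "finite (snd p) \<Longrightarrow> finite (snd q) \<Longrightarrow> odd (card (snd p)) \<Longrightarrow> odd (card (snd q)) \<Longrightarrow>
  tm p q a b = - tm q p b a"
proof -
  assume a: "finite (snd p)" "finite (snd q)" "odd (card (snd p))" "odd (card (snd q))"
  show ?thesis
  proof (cases "snd p \<inter> snd q = {}")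
    case True
    then have "card (inv (snd p) (snd q)) + card (inv (snd q) (snd p)) = card (snd p) * card (snd q)"
      using a by (simp add: card_inv_swap)
    then have "odd (card (inv (snd p) (snd q)) + card (inv (snd q) (snd p)))" using a by simp
    then have "wsign (snd p) (snd q) = - wsign (snd q) (snd p)"
      by (auto simp: wsign_inv neg_one_odd_power neg_one_even_power)
    then show ?thesis using True
      by (auto simp: tm_def add.commute Un_commute Int_commute single_uminus ac_simps)
  qed (auto simp: tm_def Int_commute)
qed

lemma rmul_anti: assumes "odd_el f" "odd_el g" shows "rmul f g = - rmul g f"
proof -
  have "rmul f g = (\<Sum>p\<in>ks f. \<Sum>q\<in>ks g. - tm q p (lk g q) (lk f p))"
    unfolding rmul_tm using assms by (intro sum.cong refl tm_anti) (auto simp: odd_el_def)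
  also have "\<dots> = - rmul g f" unfolding rmul_tm by (simp add: sum_negf) (rule sum.swap)
  finally show ?thesis .
qed

lemma rmul_sq: assumes "odd_el f" shows "rmul f f = 0"
proof -
  have "rmul f f = - rmul f f" by (rule rmul_anti[OF assms assms])
  then have "\<And>k. lk (rmul f f) k = - lk (rmul f f) k" by (metis lookup_uminus)
  then show ?thesis by (intro poly_mapping_eqI) simp
qed

lemma keys_rmul:
  assumes "k \<in> ks (rmul f g)"
  shows "\<exists>p\<in>ks f. \<exists>q\<in>ks g. snd p \<inter> snd q = {} \<and> k = (fst p + fst q, snd p \<union> snd q)"
proof (rule ccontr)
  assume n: "\<not> ?thesis"
  have "lk (rmul f g) k = (\<Sum>p\<in>ks f. \<Sum>q\<in>ks g. lk (tm p q (lk f p) (lk g q)) k)"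
    by (simp add: rmul_tm lookup_sum)
  also have "\<dots> = 0"
    using n by (intro sum.neutral ballI) (auto simp: tm_def lookup_single when_def)
  finally show False using assms by (simp add: in_keys_iff)
qed

lemma keys_add_sub: "k \<in> ks (f + g) \<Longrightarrow> k \<in> ks f \<or> k \<in> ks g"
  by (auto simp: in_keys_iff lookup_add)
lemma keys_diff_sub: "k \<in> ks (f - g) \<Longrightarrow> k \<in> ks f \<or> k \<in> ks g"
  by (auto simp: in_keys_iff lookup_minus)
lemma keys_uminus[simp]: "ks (- f) = ks f"
  by (auto simp: in_keys_iff)

lemma fin_rmul: "fin f \<Longrightarrow> fin g \<Longrightarrow> fin (rmul f g)"
  unfolding fin_def proof (intro ballI)
  fix k assume a: "\<forall>p\<in>ks f. finite (snd p)" "\<forall>p\<in>ks g. finite (snd p)" "k \<in> ks (rmul f g)"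
  then obtain p q where "p \<in> ks f" "q \<in> ks g" "k = (fst p + fst q, snd p \<union> snd q)" using keys_rmul by blast
  then show "finite (snd k)" using a by auto
qed
lemma pure_rmul: "pure f \<Longrightarrow> pure g \<Longrightarrow> pure (rmul f g)"
  unfolding pure_def proof (intro ballI)
  fix k assume a: "\<forall>p\<in>ks f. snd p = {}" "\<forall>p\<in>ks g. snd p = {}" "k \<in> ks (rmul f g)"
  then obtain p q where "p \<in> ks f" "q \<in> ks g" "k = (fst p + fst q, snd p \<union> snd q)" using keys_rmul by blast
  then show "snd k = {}" using a by auto
qed
lemma odd_rmul: "pure f \<Longrightarrow> odd_el g \<Longrightarrow> odd_el (rmul f g)"
  unfolding pure_def odd_el_def proof (intro ballI)
  fix k assume a: "\<forall>p\<in>ks f. snd p = {}" "\<forall>p\<in>ks g. finite (snd p) \<and> odd (card (snd p))" "k \<in> ks (rmul f g)"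
  then obtain p q where "p \<in> ks f" "q \<in> ks g" "k = (fst p + fst q, snd p \<union> snd q)" using keys_rmul by blast
  then show "finite (snd k) \<and> odd (card (snd k))" using a by auto
qed
lemma fin_add: "fin f \<Longrightarrow> fin g \<Longrightarrow> fin (f + g)" unfolding fin_def by (meson keys_add_sub)
lemma fin_diff: "fin f \<Longrightarrow> fin g \<Longrightarrow> fin (f - g)" unfolding fin_def by (meson keys_diff_sub)
lemma fin_uminus: "fin f \<Longrightarrow> fin (- f)" unfolding fin_def by simp
lemma fin_zero[simp]: "fin 0" unfolding fin_def by simp
lemma fin_sum: "(\<And>x. x \<in> A \<Longrightarrow> fin (F x)) \<Longrightarrow> fin (\<Sum>x\<in>A. F x)"
  by (induction A rule: infinite_finite_induct) (auto intro: fin_add)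
lemma pure_add: "pure f \<Longrightarrow> pure g \<Longrightarrow> pure (f + g)" unfolding pure_def by (meson keys_add_sub)
lemma pure_diff: "pure f \<Longrightarrow> pure g \<Longrightarrow> pure (f - g)" unfolding pure_def by (meson keys_diff_sub)
lemma odd_add: "odd_el f \<Longrightarrow> odd_el g \<Longrightarrow> odd_el (f + g)" unfolding odd_el_def by (meson keys_add_sub)
lemma fin_if_pure: "pure f \<Longrightarrow> fin f" unfolding pure_def fin_def by simp
lemma fin_if_odd: "odd_el f \<Longrightarrow> fin f" unfolding odd_el_def fin_def by simp

lemma pure_rconst[simp]: "pure (rconst c)" by (simp add: pure_def rconst_def)
lemma pure_X[simp]: "pure (X j)" by (simp add: pure_def X_def)
lemma odd_W[simp]: "odd_el (W j)" by (simp add: odd_el_def W_def)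
lemma fin_rconst[simp]: "fin (rconst c)" by (simp add: fin_if_pure)
lemma fin_X[simp]: "fin (X j)" by (simp add: fin_if_pure)
lemma fin_W[simp]: "fin (W j)" by (simp add: fin_if_odd)

lemma rconst_single: "rmul (rconst c) (sg p b) = sg p (c * b)"
  by (simp add: rconst_def rmul_single tm_def)
lemma single_rconst: "rmul (sg p b) (rconst c) = sg p (b * c)"
  by (simp add: rconst_def rmul_single tm_def)

lemma rconst1_l[simp]: "rmul (rconst 1) f = f"
  by (subst rmul_expand_r) (simp add: rconst_single flip: poly_expand)
lemma rconst1_r[simp]: "rmul f (rconst 1) = f"
  by (subst rmul_expand_l) (simp add: single_rconst flip: poly_expand)
lemma rconst_mult: "rmul (rconst a) (rconst b) = rconst (a * b)"
  by (simp add: rconst_def rconst_single[unfolded rconst_def])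
lemma rconst_rconst: "rmul (rconst a) (rmul (rconst b) f) = rmul (rconst (a * b)) f"
  by (simp add: rconst_mult flip: rmul_assoc_p1)
lemma rconst_uminus: "rconst (- a) = - rconst a" by (simp add: rconst_def single_uminus)
lemma rconst_zero[simp]: "rconst 0 = 0" by (simp add: rconst_def)

lemma X_single: "rmul (X j) (sg q c) = sg (sg j 1 + fst q, snd q) c"
  by (simp add: X_def rmul_single tm_def)

lemma X_shift: "rmul (X j) u = (\<Sum>q\<in>ks u. sg (sg j 1 + fst q, snd q) (lk u q))"
  by (subst rmul_expand_r) (simp add: X_single)

lemma X_look1: "lk (rmul (X j) u) (fst r + sg j 1, snd r) = lk u r"
proof -
  have "lk (rmul (X j) u) (fst r + sg j 1, snd r) = (\<Sum>q\<in>ks u. if q = r then lk u q else 0)"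
    unfolding X_shift lookup_sum
    by (intro sum.cong refl) (auto simp: lookup_single when_def add.commute prod_eq_iff)
  also have "\<dots> = lk u r" by (simp add: sum.delta' in_keys_iff)
  finally show ?thesis .
qed

lemma X_look0: "lk \<beta> j = 0 \<Longrightarrow> lk (rmul (X j) u) (\<beta>, S) = 0"
  unfolding X_shift lookup_sum
  by (intro sum.neutral ballI) (auto simp: lookup_single when_def lookup_add)

lemma d_cancel:
  assumes ij: "i \<noteq> j" and z: "rmul (X i - X j) u = 0"
  shows "u = 0"
proof (rule ccontr)
  assume "u \<noteq> 0"
  then have ne: "ks u \<noteq> {}" by simp
  define m where "m = Max ((\<lambda>q. lk (fst q) i) ` ks u)"
  have "m \<in> (\<lambda>q. lk (fst q) i) ` ks u"
    using Max_in[of "(\<lambda>q. lk (fst q) i) ` ks u"] ne unfolding m_def by simp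
  then obtain q0 where q0: "q0 \<in> ks u" "lk (fst q0) i = m" by (auto simp del: in_keys_iff)
  have big: "\<And>q. q \<in> ks u \<Longrightarrow> lk (fst q) i \<le> m"
    unfolding m_def by simp
  define \<beta> where "\<beta> = fst q0 + sg i 1"
  have "lk (rmul (X j) u) (\<beta>, snd q0) = 0"
  proof (cases "lk \<beta> j = 0")
    case True then show ?thesis by (rule X_look0)
  next
    case False
    define \<beta>' where "\<beta>' = \<beta> - sg j 1"
    have eq: "\<beta> = \<beta>' + sg j 1"
      using False unfolding \<beta>'_def
      by (intro poly_mapping_eqI) (auto simp: lookup_add lookup_minus lookup_single when_def)
    have "lk \<beta>' i = m + 1" using ij q0 unfolding \<beta>'_def \<beta>_def
      by (simp add: lookup_add lookup_minus lookup_single when_def)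
    then have "(\<beta>', snd q0) \<notin> ks u" using big by fastforce
    then show ?thesis using X_look1[of j u "(\<beta>', snd q0)"] eq by (simp add: in_keys_iff)
  qed
  moreover have "lk (rmul (X i) u) (\<beta>, snd q0) = lk u q0"
    using X_look1[of i u q0] unfolding \<beta>_def by simp
  moreover have "lk (rmul (X i - X j) u) (\<beta>, snd q0) = 0" using z by simp
  ultimately have "lk u q0 = 0" by (simp add: rmul_diff1 lookup_minus)
  then show False using q0 by (simp add: in_keys_iff)
qed


lemma rprod_Nil[simp]: "rprod [] = rconst 1" by (simp add: rprod_def)
lemma rprod_Cons[simp]: "rprod (a # xs) = rmul a (rprod xs)" by (simp add: rprod_def)

lemma pure_rprod: "(\<And>x. x \<in> set A \<Longrightarrow> pure x) \<Longrightarrow> pure (rprod A)"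
  by (induction A) (auto intro: pure_rmul)
lemma fin_rprod: "(\<And>x. x \<in> set A \<Longrightarrow> fin x) \<Longrightarrow> fin (rprod A)"
  by (induction A) (auto intro: fin_rmul)

lemma rprod_append_pure: "(\<And>x. x \<in> set A \<Longrightarrow> pure x) \<Longrightarrow> rprod (A @ B) = rmul (rprod A) (rprod B)"
  by (induction A) (auto simp: rmul_assoc_p1)

definition ml :: "(nat \<Rightarrow>\<^sub>0 nat) \<Rightarrow> nat list" where
  "ml \<alpha> = concat (map (\<lambda>j. replicate (lk \<alpha> j) j) (sorted_list_of_set (ks \<alpha>)))"
definition mono :: "(nat \<Rightarrow> R) \<Rightarrow> (nat \<Rightarrow> R) \<Rightarrow> K \<Rightarrow> R" where
  "mono px pw p = rprod (map px (ml (fst p)) @ map pw (sorted_list_of_set (snd p)))"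

lemma hom_eval_alt: "hom_eval px pw f = (\<Sum>p\<in>ks f. rmul (rconst (lk f p)) (mono px pw p))"
  unfolding hom_eval_def mono_def ml_def by (simp add: map_concat o_def)

lemma hom_eval_expand: "finite P \<Longrightarrow> ks f \<subseteq> P \<Longrightarrow>
   hom_eval px pw f = (\<Sum>p\<in>P. rmul (rconst (lk f p)) (mono px pw p))"
  unfolding hom_eval_alt by (rule sum.mono_neutral_right[symmetric]) (auto simp: in_keys_iff)

lemma hom_eval_add: "hom_eval px pw (f + g) = hom_eval px pw f + hom_eval px pw g"
proof -
  let ?P = "ks f \<union> ks g \<union> ks (f + g)"
  have "hom_eval px pw (f + g) = (\<Sum>p\<in>?P. rmul (rconst (lk (f + g) p)) (mono px pw p))"
    by (rule hom_eval_expand) auto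
  also have "\<dots> = (\<Sum>p\<in>?P. rmul (rconst (lk f p)) (mono px pw p)) + (\<Sum>p\<in>?P. rmul (rconst (lk g p)) (mono px pw p))"
    by (simp only: lookup_add rconst_def single_add rmul_add1 sum.distrib)
  also have "\<dots> = hom_eval px pw f + hom_eval px pw g"
    by (subst (1 2) hom_eval_expand[where P="?P"]) auto
  finally show ?thesis .
qed

lemma hom_eval_zero[simp]: "hom_eval px pw 0 = 0" by (simp add: hom_eval_def)

lemma hom_eval_uminus: "hom_eval px pw (- f) = - hom_eval px pw f"
proof -
  have "hom_eval px pw (- f + f) = hom_eval px pw (- f) + hom_eval px pw f" by (rule hom_eval_add)
  then show ?thesis by (simp add: eq_neg_iff_add_eq_0)
qed
lemma hom_eval_diff: "hom_eval px pw (f - g) = hom_eval px pw f - hom_eval px pw g"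
  by (simp only: diff_conv_add_uminus hom_eval_add hom_eval_uminus)
lemma hom_eval_sum: "hom_eval px pw (\<Sum>x\<in>A. F x) = (\<Sum>x\<in>A. hom_eval px pw (F x))"
  by (induction A rule: infinite_finite_induct) (simp_all add: hom_eval_add)
lemma hom_eval_single: "hom_eval px pw (sg p c) = rmul (rconst c) (mono px pw p)"
  by (subst hom_eval_expand[where P="{p}"]) (auto simp: lookup_single)

lemma count_concat_map: "count (mset (concat (map F L))) k = sum_list (map (\<lambda>j. count (mset (F j)) k) L)"
  by (induction L) auto

lemma count_ml: "count (mset (ml \<alpha>)) k = lk \<alpha> k"
proof -
  have "count (mset (ml \<alpha>)) k = sum_list (map (\<lambda>j. if k = j then lk \<alpha> j else 0) (sorted_list_of_set (ks \<alpha>)))"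
    unfolding ml_def count_concat_map by (simp add: count_replicate_mset)
  also have "\<dots> = (\<Sum>j\<in>ks \<alpha>. if k = j then lk \<alpha> j else 0)"
    by (simp add: sum_list_distinct_conv_sum_set)
  also have "\<dots> = lk \<alpha> k" by (simp add: sum.delta' in_keys_iff)
  finally show ?thesis .
qed

lemma mset_ml_add: "mset (ml (sg j 1 + \<alpha>)) = mset (j # ml \<alpha>)"
  by (rule multiset_eqI) (simp add: count_ml lookup_add lookup_single when_def)

lemma rprod_remove1:
  assumes "pure (px x)" "x \<in> set ys"
  shows "rprod (map px ys @ L) = rmul (px x) (rprod (map px (remove1 x ys) @ L))"
  using assms(2)
proof (induction ys)
  case (Cons y ys)
  show ?case
  proof (cases "y = x")
    case False
    then have "x \<in> set ys" using Cons by auto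
    then show ?thesis using Cons False rmul_swap[OF assms(1)] by auto
  qed simp
qed simp

lemma rprod_perm:
  assumes "\<And>j. pure (px j)"
  shows "mset xs = mset ys \<Longrightarrow> rprod (map px xs @ L) = rprod (map px ys @ L)"
proof (induction xs arbitrary: ys)
  case Nil then show ?case by simp
next
  case (Cons x xs)
  then have x: "x \<in> set ys" by (metis list.set_intros(1) set_mset_mset)
  have "mset xs = mset (remove1 x ys)" using Cons.prems by (metis add_mset_remove_trivial mset.simps(2) mset_remove1)
  then have "rprod (map px xs @ L) = rprod (map px (remove1 x ys) @ L)" by (rule Cons.IH)
  then show ?case using rprod_remove1[of px x ys L, OF assms[of x] x] by simp
qed

lemma mono_X:
  assumes "\<And>j. pure (px j)"
  shows "mono px pw (sg j 1 + \<alpha>, S) = rmul (px j) (mono px pw (\<alpha>, S))"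
  unfolding mono_def using rprod_perm[OF assms mset_ml_add] by simp

lemma hom_eval_X:
  assumes "\<And>j. pure (px j)"
  shows "hom_eval px pw (rmul (X j) f) = rmul (px j) (hom_eval px pw f)"
proof -
  have "hom_eval px pw (rmul (X j) f) = (\<Sum>q\<in>ks f. rmul (rconst (lk f q)) (mono px pw (sg j 1 + fst q, snd q)))"
    by (simp add: X_shift hom_eval_sum hom_eval_single)
  also have "\<dots> = (\<Sum>q\<in>ks f. rmul (px j) (rmul (rconst (lk f q)) (mono px pw q)))"
  proof (intro sum.cong refl)
    fix q
    have m: "mono px pw (sg j 1 + fst q, snd q) = rmul (px j) (mono px pw q)"
      using mono_X[of px pw j "fst q" "snd q", OF assms] by simp
    show "rmul (rconst (lk f q)) (mono px pw (sg j 1 + fst q, snd q)) = rmul (px j) (rmul (rconst (lk f q)) (mono px pw q))"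
      unfolding m by (rule rmul_swap[OF assms])
  qed
  also have "\<dots> = rmul (px j) (hom_eval px pw f)"
    by (simp add: hom_eval_alt rmul_sum2)
  finally show ?thesis .
qed


lemma wsign_single: "wsign {j} B = (-1) ^ card {b\<in>B. b < j}"
proof -
  have "inv {j} B = (\<lambda>b. (j, b)) ` {b\<in>B. b < j}" by (auto simp: inv_def)
  moreover have "card ((\<lambda>b. (j, b)) ` {b\<in>B. b < j}) = card {b\<in>B. b < j}"
    by (rule card_image) (simp add: inj_on_def)
  ultimately show ?thesis by (simp add: wsign_inv)
qed

lemma wsign_lt: "(\<And>b. b \<in> B \<Longrightarrow> j < b) \<Longrightarrow> wsign {j} B = 1"
proof -
  assume "\<And>b. b \<in> B \<Longrightarrow> j < b"
  then have e: "{b\<in>B. b < j} = {}" by fastforce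
  show ?thesis unfolding wsign_single e by simp
qed

lemma wsign_ins: "finite B \<Longrightarrow> l \<notin> B \<Longrightarrow> l < j \<Longrightarrow> wsign {j} (insert l B) = - wsign {j} B"
proof -
  assume a: "finite B" "l \<notin> B" "l < j"
  then have "{b\<in>insert l B. b < j} = insert l {b\<in>B. b < j}" by auto
  then have "card {b\<in>insert l B. b < j} = Suc (card {b\<in>B. b < j})" using a by simp
  then show ?thesis by (simp add: wsign_single)
qed

lemma wsign_sq: "wsign A B * wsign A B = 1"
  by (simp add: wsign_def flip: power_add mult_2)

lemma pw_anti:
  assumes odd: "\<And>a. odd_el (pw a)" and fR: "fin R"
  shows "rmul (pw a) (rmul (pw b) R) = - rmul (pw b) (rmul (pw a) R)"
proof -
  have "rmul (pw a) (rmul (pw b) R) = rmul (rmul (pw a) (pw b)) R"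
    by (rule rmul_assoc_fin[symmetric]) (auto intro: fin_if_odd odd fR)
  also have "\<dots> = rmul (- rmul (pw b) (pw a)) R" using rmul_anti[OF odd[of a] odd[of b]] by simp
  also have "\<dots> = - rmul (rmul (pw b) (pw a)) R" by (rule rmul_uminus1)
  also have "\<dots> = - rmul (pw b) (rmul (pw a) R)"
    by (subst rmul_assoc_fin) (auto intro: fin_if_odd odd fR)
  finally show ?thesis .
qed

lemma pw_sq:
  assumes odd: "\<And>a. odd_el (pw a)" and fR: "fin R"
  shows "rmul (pw a) (rmul (pw a) R) = 0"
proof -
  have "rmul (pw a) (rmul (pw a) R) = rmul (rmul (pw a) (pw a)) R"
    by (rule rmul_assoc_fin[symmetric]) (auto intro: fin_if_odd odd fR)
  then show ?thesis using rmul_sq[OF odd[of a]] by simp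
qed

lemma W12:
  assumes odd: "\<And>a. odd_el (pw a)"
  shows "sorted_wrt (<) L \<Longrightarrow> (j \<in> set L \<longrightarrow> rmul (pw j) (rprod (map pw L)) = 0) \<and>
    (j \<notin> set L \<longrightarrow> rprod (map pw (insort j L)) = rmul (rconst (wsign {j} (set L))) (rmul (pw j) (rprod (map pw L))))"
proof (induction L)
  case Nil then show ?case by simp
next
  case (Cons l L)
  let ?R = "rprod (map pw L)"
  have fR: "fin ?R" by (rule fin_rprod) (auto intro: fin_if_odd odd)
  have sl: "sorted_wrt (<) L" "\<And>b. b \<in> set L \<Longrightarrow> l < b" using Cons.prems by auto
  note IH = Cons.IH[OF sl(1)]
  show ?case
  proof (intro conjI impI)
    assume j: "j \<in> set (l # L)"
    show "rmul (pw j) (rprod (map pw (l # L))) = 0"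
    proof (cases "j = l")
      case True then show ?thesis using pw_sq[of pw ?R, OF odd fR] by simp
    next
      case False
      then have "rmul (pw j) ?R = 0" using IH j by simp
      then show ?thesis using pw_anti[of pw ?R j l, OF odd fR] by simp
    qed
  next
    assume j: "j \<notin> set (l # L)"
    show "rprod (map pw (insort j (l # L))) = rmul (rconst (wsign {j} (set (l # L)))) (rmul (pw j) (rprod (map pw (l # L))))"
    proof (cases "j < l")
      case True
      then have "wsign {j} (set (l # L)) = 1" using sl(2) by (intro wsign_lt) fastforce
      then show ?thesis using True by simp
    next
      case False
      then have lj: "l < j" using j by simp
      let ?w = "wsign {j} (set L)"
      have w: "wsign {j} (insert l (set L)) = - ?w"
        using wsign_ins[of "set L" l j] lj sl(2) by auto
      have "rprod (map pw (insort j (l # L))) = rmul (pw l) (rmul (rconst ?w) (rmul (pw j) ?R))"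
        using IH j False by simp
      also have "\<dots> = rmul (rconst ?w) (rmul (pw l) (rmul (pw j) ?R))"
        by (rule rmul_swap) simp
      also have "\<dots> = rmul (rconst ?w) (- rmul (pw j) (rmul (pw l) ?R))"
        using pw_anti[of pw ?R l j, OF odd fR] by simp
      also have "\<dots> = rmul (rconst (wsign {j} (set (l # L)))) (rmul (pw j) (rprod (map pw (l # L))))"
        by (simp add: w rconst_uminus rmul_uminus1 rmul_uminus2)
      finally show ?thesis .
    qed
  qed
qed

lemma hom_eval_W:
  assumes pure: "\<And>j. pure (px j)" and odd: "\<And>a. odd_el (pw a)" and ff: "fin f"
  shows "hom_eval px pw (rmul (W j) f) = rmul (pw j) (hom_eval px pw f)"
proof -
  have "hom_eval px pw (rmul (W j) f) = (\<Sum>q\<in>ks f. hom_eval px pw (tm (0, {j}) q 1 (lk f q)))"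
    by (subst rmul_expand_r) (simp add: hom_eval_sum W_def rmul_single)
  also have "\<dots> = (\<Sum>q\<in>ks f. rmul (pw j) (rmul (rconst (lk f q)) (mono px pw q)))"
  proof (intro sum.cong refl)
    fix q assume q: "q \<in> ks f"
    obtain \<alpha> S where qq: "q = (\<alpha>, S)" by (cases q)
    have fS: "finite S" using ff q qq by (auto simp: fin_def)
    let ?c = "lk f q"
    let ?P = "rprod (map px (ml \<alpha>))"
    let ?Q = "rprod (map pw (sorted_list_of_set S))"
    have pP: "pure ?P" by (rule pure_rprod) (auto intro: pure)
    have mono_eq: "\<And>T. mono px pw (\<alpha>, T) = rmul ?P (rprod (map pw (sorted_list_of_set T)))"
      unfolding mono_def fst_conv snd_conv by (rule rprod_append_pure) (auto intro: pure)
    have srt: "sorted_wrt (<) (sorted_list_of_set S)" by simp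
    have rhs: "rmul (pw j) (rmul (rconst ?c) (mono px pw q)) = rmul (rconst ?c) (rmul ?P (rmul (pw j) ?Q))"
    proof -
      have "rmul (pw j) (rmul (rconst ?c) (rmul ?P ?Q)) = rmul (rconst ?c) (rmul (pw j) (rmul ?P ?Q))"
        by (rule rmul_swap) simp
      also have "\<dots> = rmul (rconst ?c) (rmul ?P (rmul (pw j) ?Q))"
        using rmul_swap[OF pP, of "pw j" ?Q] by simp
      finally show ?thesis unfolding qq mono_eq .
    qed
    show "hom_eval px pw (tm (0, {j}) q 1 ?c) = rmul (pw j) (rmul (rconst ?c) (mono px pw q))"
    proof (cases "j \<in> S")
      case True
      then have "rmul (pw j) ?Q = 0" using W12[of pw "sorted_list_of_set S" j, OF odd srt] fS by simp
      then show ?thesis using True unfolding rhs by (simp add: tm_def qq)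
    next
      case False
      let ?w = "wsign {j} S"
      have ins: "sorted_list_of_set (insert j S) = insort j (sorted_list_of_set S)"
        using fS False by (simp add: sorted_list_of_set_insert)
      have Qj: "rprod (map pw (sorted_list_of_set (insert j S))) = rmul (rconst ?w) (rmul (pw j) ?Q)"
        unfolding ins using W12[of pw "sorted_list_of_set S" j, OF odd srt] fS False by simp
      have "hom_eval px pw (tm (0, {j}) q 1 ?c) = rmul (rconst (?w * ?c)) (mono px pw (\<alpha>, insert j S))"
        using False by (simp add: tm_def qq hom_eval_single)
      also have "\<dots> = rmul (rconst (?w * ?c)) (rmul (rconst ?w) (rmul ?P (rmul (pw j) ?Q)))"
        unfolding mono_eq Qj using rmul_swap[OF pure_rconst, of ?P ?w "rmul (pw j) ?Q"] by simp
      also have "\<dots> = rmul (rconst (?w * ?c * ?w)) (rmul ?P (rmul (pw j) ?Q))"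
        by (simp add: rconst_rconst)
      also have "?w * ?c * ?w = ?c" using wsign_sq[of "{j}" S] by (simp add: algebra_simps)
      finally show ?thesis unfolding rhs by simp
    qed
  qed
  also have "\<dots> = rmul (pw j) (hom_eval px pw f)"
    by (simp add: hom_eval_alt rmul_sum2)
  finally show ?thesis .
qed


definition pxi :: "nat \<Rightarrow> nat \<Rightarrow> R" where
  "pxi i = (\<lambda>j. X (if j = i then Suc i else if j = Suc i then i else j))"
definition pwi :: "nat \<Rightarrow> nat \<Rightarrow> R" where
  "pwi i = (\<lambda>j. if j = i then W i + rmul (X i - X (Suc i)) (W (Suc i)) else W j)"

lemma s_eq: "s i = hom_eval (pxi i) (pwi i)"
  unfolding s_def pxi_def pwi_def by (rule refl)

lemma pure_pxi: "pure (pxi i j)" by (simp add: pxi_def)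
lemma odd_pwi: "odd_el (pwi i j)"
  by (simp add: pwi_def odd_add odd_rmul pure_diff)
lemma fin_pxi: "fin (pxi i j)" by (simp add: fin_if_pure pure_pxi)
lemma fin_pwi: "fin (pwi i j)" by (simp add: fin_if_odd odd_pwi)

lemma ml_zero[simp]: "ml 0 = []" by (simp add: ml_def)

lemma s_one: "s i (rconst 1) = rconst 1"
  unfolding s_eq rconst_def hom_eval_single by (simp add: mono_def flip: rconst_def)

lemma s_X_mul: "s i (rmul (X j) f) = rmul (pxi i j) (s i f)"
  unfolding s_eq by (rule hom_eval_X) (rule pure_pxi)
lemma s_W_mul: "fin f \<Longrightarrow> s i (rmul (W j) f) = rmul (pwi i j) (s i f)"
  unfolding s_eq by (rule hom_eval_W) (auto intro: pure_pxi odd_pwi)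
lemma s_X: "s i (X j) = pxi i j" using s_X_mul[of i j "rconst 1"] by (simp add: s_one)
lemma s_W: "s i (W j) = pwi i j" using s_W_mul[of "rconst 1" i j] by (simp add: s_one)
lemma s_diff: "s i (f - g) = s i f - s i g" unfolding s_eq by (rule hom_eval_diff)
lemma s_add: "s i (f + g) = s i f + s i g" unfolding s_eq by (rule hom_eval_add)
lemma s_zero[simp]: "s i 0 = 0" unfolding s_eq by simp

lemma fin_mono: "(\<And>j. fin (px j)) \<Longrightarrow> (\<And>j. fin (pw j)) \<Longrightarrow> fin (mono px pw p)"
  unfolding mono_def by (rule fin_rprod) auto

lemma fin_s: "fin (s i f)"
  unfolding s_eq hom_eval_alt
  by (intro fin_sum fin_rmul fin_rconst fin_mono fin_pxi fin_pwi)

definition Dv :: "nat \<Rightarrow> R \<Rightarrow> bool" where "Dv i u = (\<exists>t. u = rmul (X i - X (Suc i)) t)"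

lemma pure_d: "pure (X i - X (Suc i))" by (simp add: pure_diff)

lemma Dv_zero[simp]: "Dv i 0" unfolding Dv_def by (rule exI[of _ 0]) simp
lemma Dv_add: "Dv i u \<Longrightarrow> Dv i v \<Longrightarrow> Dv i (u + v)"
  unfolding Dv_def by (metis rmul_add2)
lemma Dv_diff: "Dv i u \<Longrightarrow> Dv i v \<Longrightarrow> Dv i (u - v)"
  unfolding Dv_def by (metis rmul_diff2)
lemma Dv_sum: "(\<And>x. x \<in> A \<Longrightarrow> Dv i (F x)) \<Longrightarrow> Dv i (\<Sum>x\<in>A. F x)"
  by (induction A rule: infinite_finite_induct) (auto intro: Dv_add)
lemma Dv_lmul: "Dv i u \<Longrightarrow> Dv i (rmul a u)"
  unfolding Dv_def using rmul_swap[OF pure_d] by metis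
lemma Dv_rmul: "Dv i u \<Longrightarrow> Dv i (rmul u b)"
  unfolding Dv_def using rmul_assoc_p1[OF pure_d] by metis

lemma Dv_tele: "list_all2 (\<lambda>a b. Dv i (a - b)) A B \<Longrightarrow> Dv i (rprod A - rprod B)"
proof (induction rule: list_all2_induct)
  case Nil then show ?case by simp
next
  case (Cons a A b B)
  have "rmul a (rprod A) - rmul b (rprod B) = rmul (a - b) (rprod A) + rmul b (rprod A - rprod B)"
    by (simp add: rmul_diff1 rmul_diff2)
  then show ?case using Cons by (auto intro: Dv_add Dv_rmul Dv_lmul)
qed

lemma Dv_X: "Dv i (X j - pxi i j)"
proof -
  consider "j = i" | "j = Suc i" | "j \<noteq> i \<and> j \<noteq> Suc i" by blast
  then show ?thesis
  proof cases
    case 1 then show ?thesis unfolding Dv_def pxi_def by (intro exI[of _ "rconst 1"]) simp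
  next
    case 2 then show ?thesis unfolding Dv_def pxi_def
      by (intro exI[of _ "- rconst 1"]) (simp add: rmul_uminus2)
  qed (simp add: pxi_def)
qed

lemma Dv_W: "Dv i (W j - pwi i j)"
proof (cases "j = i")
  case True then show ?thesis unfolding Dv_def pwi_def
    by (intro exI[of _ "- W (Suc i)"]) (simp add: rmul_uminus2)
qed (simp add: pwi_def)

lemma la2_map: "(\<And>x. Q (f x) (g x)) \<Longrightarrow> list_all2 Q (map f xs) (map g xs)"
  by (induction xs) auto

lemma Dv_mono: "Dv i (mono X W p - mono (pxi i) (pwi i) p)"
  unfolding mono_def
  by (intro Dv_tele list_all2_appendI la2_map Dv_X Dv_W)

lemma lk_sum_list_single: "lk (sum_list (map (\<lambda>j. sg j 1) xs)) k = count (mset xs) k"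
  by (induction xs) (auto simp: lookup_add lookup_single when_def)

lemma sum_ml: "sum_list (map (\<lambda>j. sg j 1) (ml \<alpha>)) = \<alpha>"
  by (rule poly_mapping_eqI) (simp only: lk_sum_list_single count_ml)

lemma rprod_Xs: "rprod (map X xs) = sg (sum_list (map (\<lambda>j. sg j 1) xs), {}) 1"
  by (induction xs) (simp_all add: rconst_def X_single)

lemma rprod_Ws: "sorted_wrt (<) L \<Longrightarrow> rprod (map W L) = sg (0, set L) 1"
proof (induction L)
  case Nil then show ?case by (simp add: rconst_def)
next
  case (Cons l L)
  then have "wsign {l} (set L) = 1" by (intro wsign_lt) auto
  then show ?case using Cons by (auto simp: W_def rmul_single tm_def)
qed

lemma mono_XW: "finite S \<Longrightarrow> mono X W (\<alpha>, S) = sg (\<alpha>, S) 1"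
  unfolding mono_def fst_conv snd_conv
  by (subst rprod_append_pure) (auto simp: rprod_Xs sum_ml[simplified] rprod_Ws rmul_single tm_def)

lemma exist_T:
  assumes "fin f"
  shows "Dv i (f - s i f)"
proof -
  have "f - s i f = (\<Sum>p\<in>ks f. rmul (rconst (lk f p)) (mono X W p)) - (\<Sum>p\<in>ks f. rmul (rconst (lk f p)) (mono (pxi i) (pwi i) p))"
  proof -
    have "(\<Sum>p\<in>ks f. rmul (rconst (lk f p)) (mono X W p)) = (\<Sum>p\<in>ks f. sg p (lk f p))"
      using assms by (intro sum.cong refl) (auto simp: fin_def mono_XW rconst_single)
    then show ?thesis by (simp add: s_eq hom_eval_alt flip: poly_expand)
  qed
  also have "\<dots> = (\<Sum>p\<in>ks f. rmul (rconst (lk f p)) (mono X W p - mono (pxi i) (pwi i) p))"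
    by (simp add: rmul_diff2 sum_subtractf)
  finally show ?thesis by (simp add: Dv_sum Dv_lmul Dv_mono)
qed


lemma fin_omega: "fin (omega k a)"
  by (induction k a rule: omega.induct) (auto intro: fin_diff fin_rmul fin_X)

lemma s_omega_mul: "fin f \<Longrightarrow> s i (rmul (omega k a) f) = rmul (s i (omega k a)) (s i f)"
proof (induction k a arbitrary: f rule: omega.induct)
  case (1 a) then show ?case by simp
next
  case (2 k) then show ?case by (simp add: s_W_mul s_W)
next
  case (3 k a)
  let ?A = "omega k a" and ?B = "omega (Suc k) a"
  have fB: "fin (rmul ?B f)" using 3 by (intro fin_rmul fin_omega)
  have "s i (rmul (?A - rmul (X (Suc k)) ?B) f) = s i (rmul ?A f - rmul (X (Suc k)) (rmul ?B f))"
    by (simp add: rmul_diff1 rmul_assoc_p1)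
  also have "\<dots> = rmul (s i ?A) (s i f) - rmul (pxi i (Suc k)) (rmul (s i ?B) (s i f))"
    using 3 by (simp add: s_diff s_X_mul)
  also have "\<dots> = rmul (s i ?A - rmul (pxi i (Suc k)) (s i ?B)) (s i f)"
    by (simp add: rmul_diff1 rmul_assoc_p1 pure_pxi)
  also have "s i ?A - rmul (pxi i (Suc k)) (s i ?B) = s i (?A - rmul (X (Suc k)) ?B)"
    by (simp add: s_diff s_X_mul)
  finally show ?case by simp
qed

lemma s_omega:
  assumes i: "1 \<le> i"
  shows "(\<forall>k. k \<noteq> i \<longrightarrow> s i (omega k a) = omega k a) \<and>
         s i (omega i a) = omega i a + rmul (X i - X (Suc i)) (omega (Suc i) a)"
proof (induction a)
  case 0
  obtain i' where i': "i = Suc i'" using i by (cases i) auto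
  show ?case
  proof (intro conjI allI impI)
    fix k assume "k \<noteq> i" then show "s i (omega k 0) = omega k 0"
      by (cases k) (auto simp: s_W pwi_def)
  next
    show "s i (omega i 0) = omega i 0 + rmul (X i - X (Suc i)) (omega (Suc i) 0)"
      by (simp add: i' s_W pwi_def)
  qed
next
  case (Suc a)
  obtain i' where i': "i = Suc i'" using i by (cases i) auto
  let ?d = "X i - X (Suc i)"
  have IH1: "\<And>k. k \<noteq> i \<Longrightarrow> s i (omega k a) = omega k a" using Suc by blast
  have IH2: "s i (omega i a) = omega i a + rmul ?d (omega (Suc i) a)" using Suc by blast
  show ?case
  proof (intro conjI allI impI)
    fix k assume k: "k \<noteq> i"
    show "s i (omega k (Suc a)) = omega k (Suc a)"
    proof (cases k)
      case 0 then show ?thesis by simp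
    next
      case (Suc k')
      show ?thesis
      proof (cases "k' = i")
        case True
        have "s i (omega k (Suc a)) = s i (omega i a) - rmul (X i) (s i (omega (Suc i) a))"
          using Suc True by (simp add: s_diff s_X_mul pxi_def)
        also have "\<dots> = omega i a + rmul ?d (omega (Suc i) a) - rmul (X i) (omega (Suc i) a)"
          using IH1[of "Suc i"] IH2 by simp
        also have "\<dots> = omega i a - rmul (X (Suc i)) (omega (Suc i) a)"
          by (simp add: rmul_diff1)
        also have "\<dots> = omega k (Suc a)" using Suc True by simp
        finally show ?thesis .
      next
        case False
        have "s i (omega k (Suc a)) = s i (omega k' a) - rmul (X k) (s i (omega k a))"
          using Suc False k by (simp add: s_diff s_X_mul pxi_def)
        also have "\<dots> = omega k (Suc a)" using IH1[OF k] IH1[OF False] Suc by simp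
        finally show ?thesis .
      qed
    qed
  next
    have "s i (omega i (Suc a)) = omega i' a - rmul (X (Suc i)) (omega i a + rmul ?d (omega (Suc i) a))"
      using IH1[of i'] IH2 i' by (simp add: s_diff s_X_mul pxi_def)
    also have "\<dots> = omega i' a - rmul (X (Suc i)) (omega i a) - rmul ?d (rmul (X (Suc i)) (omega (Suc i) a))"
      by (simp add: rmul_add2 rmul_swap[OF pure_d] algebra_simps)
    also have "\<dots> = omega i (Suc a) + rmul ?d (omega (Suc i) (Suc a))"
      using i' by (simp add: rmul_diff1 rmul_diff2 algebra_simps)
    finally show "s i (omega i (Suc a)) = omega i (Suc a) + rmul ?d (omega (Suc i) (Suc a))" .
  qed
qed

lemma T_eq:
  assumes "fin f" "rmul (X i - X (Suc i)) t = f - s i f"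
  shows "T i f = t"
  unfolding T_def
proof (rule the_equality)
  show "rmul (X i - X (Suc i)) t = f - s i f" by (rule assms(2))
next
  fix t' assume "rmul (X i - X (Suc i)) t' = f - s i f"
  then have "rmul (X i - X (Suc i)) (t' - t) = 0" using assms(2) by (simp add: rmul_diff2)
  then have "t' - t = 0" by (rule d_cancel[rotated]) simp
  then show "t' = t" by simp
qed

lemma T_comm:
  assumes fg: "fin g" and fx: "s i g = g" and mul: "\<And>f. fin f \<Longrightarrow> s i (rmul g f) = rmul (s i g) (s i f)"
    and ff: "fin f"
  shows "T i (rmul g f) = rmul g (T i f)"
proof -
  obtain t where t: "f - s i f = rmul (X i - X (Suc i)) t" using exist_T[OF ff, of i] unfolding Dv_def by blast
  have Tf: "T i f = t" using T_eq[OF ff t[symmetric]] .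
  have "rmul (X i - X (Suc i)) (rmul g t) = rmul g (rmul (X i - X (Suc i)) t)"
    by (rule rmul_swap[OF pure_d, symmetric])
  also have "\<dots> = rmul g f - rmul g (s i f)" by (simp add: t[symmetric] rmul_diff2)
  also have "\<dots> = rmul g f - s i (rmul g f)" using mul[OF ff] fx by simp
  finally have "T i (rmul g f) = rmul g t" by (intro T_eq fin_rmul fg ff)
  then show ?thesis using Tf by simp
qed

lemma inR_fin: "inR n f \<Longrightarrow> fin f"
  unfolding inR_def fin_def by (meson finite_atLeastAtMost finite_subset)

theorem proposition2p11:
  fixes n i k a :: nat
  assumes "1 \<le> i" and "i \<le> n - 1" and "1 \<le> k" and "k \<le> n"
  shows "(i \<noteq> k \<longrightarrow>
            (\<forall>f. inR n f \<longrightarrow> T i (rmul (omega k a) f) = rmul (omega k a) (T i f)))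
       \<and> (\<forall>f. inR n f \<longrightarrow>
            T i (rmul (omega i a - rmul (X (Suc i)) (omega (Suc i) a)) f)
              = rmul (omega i a - rmul (X (Suc i)) (omega (Suc i) a)) (T i f))"
proof -
  have gen: "\<And>k a f. k \<noteq> i \<Longrightarrow> inR n f \<Longrightarrow> T i (rmul (omega k a) f) = rmul (omega k a) (T i f)"
  proof -
    fix k a f assume k: "k \<noteq> i" and f: "inR n f"
    show "T i (rmul (omega k a) f) = rmul (omega k a) (T i f)"
      by (rule T_comm[OF fin_omega _ s_omega_mul inR_fin[OF f]])
         (use s_omega[OF assms(1), of a] k in auto)
  qed
  have "omega i a - rmul (X (Suc i)) (omega (Suc i) a) = omega (Suc i) (Suc a)" by simp
  then show ?thesis using gen[where k="Suc i" and a="Suc a"] gen by auto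
qed

end
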